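(* Let $\mathcal M=(G,In,Out,Leak)$ be a strongly connected linear compartmental model with $|In|=|Out|=1$. Let $n$ be the number of compartments and $L$ the length of a shortest directed path in $G$ from the input compartment to the output compartment. In the input-output equation $\det(\partial I-A)y_i=(-1)^{i+j}\det((\partial I-A)^{j,i})u_j$ (with $In=\{j\}$, $Out=\{i\}$), the number of non-constant coefficients on the left-hand side is $n$ if $Leak\ne\emptyset$ and $n-1$ if $Leak=\emptyset$; the number of non-constant coefficients on the right-hand side is $n-1$ if $In=Out$ and $n-L$ if $In\ne Out$.
   Context: A linear compartmental model $\mathcal M=(G,In,Out,Leak)$ consists of a finite directed graph $G=(V_G,E_G)$ without multi-edges, compartments $V_G=\{1,\dots,n\}$, and subsets $In,Out,Leak\subseteq V_G$; edge $k\to \ell$ carries parameter $a_{\ell k}$ and each $\ell\in Leak$ carries $a_{0\ell}$ (independent indeterminates). The compartmental matrix $A$ has $A_{\ell\ell}=-\sum_{k:\,\ell\to k\in E_G}a_{k\ell}$ (minus $a_{0\ell}$ if $\ell\in Leak$), $A_{\ell k}=a_{\ell k}$ if $k\to\ell\in E_G$, $0$ otherwise. $B^{p,q}$ denotes $B$ with row $p$ and column $q$ removed, and $\partial I$ is the diagonal matrix with entries $d/dt$. The equation is viewed as a polynomial in $y_i,u_j$ and their derivatives, whose coefficients are polynomials in the parameters; "non-constant" refers to these polynomials. *)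

theory Defs
  imports "HOL-Library.Poly_Mapping" "HOL-Computational_Algebra.Polynomial"
    "Jordan_Normal_Form.Determinant"
begin

text \<open>Parameters of a linear compartmental model: EdgeP l k is a_{l k} (edge k -> l),
  LeakP l is a_{0 l}.\<close>
datatype param = EdgeP nat nat | LeakP nat

type_synonym ppoly = "(param \<Rightarrow>\<^sub>0 nat) \<Rightarrow>\<^sub>0 int"

definition pvar :: "param \<Rightarrow> ppoly" where
  "pvar p = Poly_Mapping.single (Poly_Mapping.single p 1) 1"

definition nonconst :: "ppoly \<Rightarrow> bool" where
  "nonconst c \<longleftrightarrow> (\<exists>m. m \<noteq> 0 \<and> Poly_Mapping.lookup c m \<noteq> 0)"

text \<open>Compartmental matrix; compartments are 0..<n, E is the edge set (pairs (k,l) for k -> l).\<close>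
definition comp_matrix :: "nat \<Rightarrow> (nat \<times> nat) set \<Rightarrow> nat set \<Rightarrow> ppoly mat" where
  "comp_matrix n E Lk = mat n n (\<lambda>(l,k).
     if l = k then
       - (\<Sum>k'\<in>{k'. (l,k') \<in> E}. pvar (EdgeP k' l)) - (if l \<in> Lk then pvar (LeakP l) else 0)
     else if (k,l) \<in> E then pvar (EdgeP l k) else 0)"

text \<open>The operator matrix dI - A, with the derivative operator d represented by the
  polynomial variable.\<close>
definition op_matrix :: "nat \<Rightarrow> (nat \<times> nat) set \<Rightarrow> nat set \<Rightarrow> ppoly poly mat" where
  "op_matrix n E Lk = mat n n (\<lambda>(l,k).
     (if l = k then monom 1 1 else 0) - [: comp_matrix n E Lk $$ (l,k) :])"

definition num_nonconst :: "ppoly poly \<Rightarrow> nat" where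
  "num_nonconst p = card {k. nonconst (coeff p k)}"

definition strongly_connected :: "nat \<Rightarrow> (nat \<times> nat) set \<Rightarrow> bool" where
  "strongly_connected n E \<longleftrightarrow> (\<forall>u<n. \<forall>v<n. (u,v) \<in> E\<^sup>*)"

definition shortest_path_len :: "(nat \<times> nat) set \<Rightarrow> nat \<Rightarrow> nat \<Rightarrow> nat" where
  "shortest_path_len E u v = (LEAST k. (u,v) \<in> E ^^ k)"

end

theory Submission imports Defs "HOL-Combinatorics.Cycles" "Jordan_Normal_Form.Char_Poly"
begin

definition mon :: "(param \<Rightarrow> int) \<Rightarrow> (param \<Rightarrow>\<^sub>0 nat) \<Rightarrow> int" where
  "mon v m = (\<Prod>p\<in>Poly_Mapping.keys m. v p ^ Poly_Mapping.lookup m p)"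

definition ev :: "(param \<Rightarrow> int) \<Rightarrow> ppoly \<Rightarrow> int" where
  "ev v c = (\<Sum>m\<in>Poly_Mapping.keys c. Poly_Mapping.lookup c m * mon v m)"

lemma mon_superset: "finite S \<Longrightarrow> Poly_Mapping.keys m \<subseteq> S \<Longrightarrow>
   mon v m = (\<Prod>p\<in>S. v p ^ Poly_Mapping.lookup m p)"
  unfolding mon_def
  by (rule prod.mono_neutral_left) (auto simp: in_keys_iff)

lemma mon_add: "mon v (a + b) = mon v a * mon v b"
proof -
  let ?S = "Poly_Mapping.keys a \<union> Poly_Mapping.keys b"
  have k: "Poly_Mapping.keys (a+b) \<subseteq> ?S" by (rule keys_add)
  show ?thesis
    by (simp add: mon_superset[OF _ k] mon_superset[of ?S a] mon_superset[of ?S b]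
        lookup_add power_add prod.distrib)
qed

lemma mon_zero[simp]: "mon v 0 = 1" by (simp add: mon_def)

lemma ev_superset: "finite S \<Longrightarrow> Poly_Mapping.keys c \<subseteq> S \<Longrightarrow>
   ev v c = (\<Sum>m\<in>S. Poly_Mapping.lookup c m * mon v m)"
  unfolding ev_def
  by (rule sum.mono_neutral_left) (auto simp: in_keys_iff)

lemma ev_add: "ev v (c + d) = ev v c + ev v d"
proof -
  let ?S = "Poly_Mapping.keys c \<union> Poly_Mapping.keys d"
  have k: "Poly_Mapping.keys (c+d) \<subseteq> ?S" by (rule keys_add)
  show ?thesis
    by (simp add: ev_superset[OF _ k] ev_superset[of ?S c] ev_superset[of ?S d]
        lookup_add distrib_right sum.distrib)
qed

lemma ev_zero[simp]: "ev v 0 = 0" by (simp add: ev_def)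

lemma ev_single: "ev v (Poly_Mapping.single m a) = a * mon v m"
  by (cases "a = 0") (auto simp: ev_def)

lemma ev_sum: "ev v (sum f S) = (\<Sum>x\<in>S. ev v (f x))"
  by (induct S rule: infinite_finite_induct) (auto simp: ev_add)

lemma pm_expand: "(c::ppoly) = (\<Sum>m\<in>Poly_Mapping.keys c. Poly_Mapping.single m (Poly_Mapping.lookup c m))"
  by (rule poly_mapping_eqI) (simp add: lookup_sum lookup_single when_def in_keys_iff
        sum.delta'[unfolded in_keys_iff] )

lemma ev_mult: "ev v (c * d) = ev v c * ev v d"
proof -
  have "ev v (c * d) = ev v ((\<Sum>m\<in>Poly_Mapping.keys c. Poly_Mapping.single m (Poly_Mapping.lookup c m))
     * (\<Sum>m\<in>Poly_Mapping.keys d. Poly_Mapping.single m (Poly_Mapping.lookup d m)))"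
    using pm_expand[of c] pm_expand[of d] by simp
  also have "\<dots> = (\<Sum>m\<in>Poly_Mapping.keys c. \<Sum>m'\<in>Poly_Mapping.keys d.
       Poly_Mapping.lookup c m * mon v m * (Poly_Mapping.lookup d m' * mon v m'))"
    by (simp add: sum_product ev_sum mult_single ev_single mon_add mult_ac)
  also have "\<dots> = ev v c * ev v d"
    by (simp add: ev_def sum_product)
  finally show ?thesis .
qed

lemma ev_one: "ev v 1 = 1"
  by (simp add: ev_def)

interpretation evh: comm_ring_hom "ev v"
  by unfold_locales (auto simp: ev_mult ev_add ev_one)

lemma ev_pvar[simp]: "ev v (pvar p) = v p"
  by (simp add: pvar_def ev_single mon_def)

lemma ev_zero_point: "ev (\<lambda>_. 0) c = Poly_Mapping.lookup c 0"
proof -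
  have "mon (\<lambda>_. 0) m = (if m = 0 then 1 else 0)" for m
  proof (cases "m = 0")
    case False
    then obtain p where "p \<in> Poly_Mapping.keys m" by (metis keys_eq_empty ex_in_conv)
    then show ?thesis using False unfolding mon_def
      by (intro prod_zero[THEN trans]) (auto simp: in_keys_iff)
  qed simp
  then have "ev (\<lambda>_. 0) c = (\<Sum>m\<in>Poly_Mapping.keys c. if m = 0 then Poly_Mapping.lookup c m else 0)"
    unfolding ev_def by (intro sum.cong) auto
  also have "\<dots> = Poly_Mapping.lookup c 0"
    by (simp add: sum.delta in_keys_iff)
  finally show ?thesis .
qed

lemma det_rank_tri:
  fixes M :: "'a::comm_ring_1 mat" and r :: "nat \<Rightarrow> nat"
  assumes M: "M \<in> carrier_mat n n"
    and tri: "\<And>a b. a < n \<Longrightarrow> b < n \<Longrightarrow> a \<noteq> b \<Longrightarrow> M $$ (a,b) \<noteq> 0 \<Longrightarrow> r a < r b"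
  shows "det M = (\<Prod>l = 0..<n. M $$ (l,l))"
proof -
  let ?P = "{p. p permutes {0..<n}}"
  have z: "signof p * (\<Prod>l = 0..<n. M $$ (l, p l)) = 0" if p: "p \<in> ?P - {id}" for p
  proof (rule ccontr)
    assume "signof p * (\<Prod>l = 0..<n. M $$ (l, p l)) \<noteq> 0"
    then have nz: "M $$ (l, p l) \<noteq> 0" if "l < n" for l
    proof -
      have "M $$ (l, p l) = 0 \<Longrightarrow> (\<Prod>l = 0..<n. M $$ (l, p l)) = 0"
        by (rule prod_zero) (use that in auto)
      then show ?thesis using \<open>signof p * _ \<noteq> 0\<close> by auto
    qed
    from p have pp: "p permutes {0..<n}" and "p \<noteq> id" by auto
    then obtain l0 where "p l0 \<noteq> l0" by (auto simp: fun_eq_iff)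
    then have l0: "l0 < n" using pp permutes_not_in by fastforce
    have le: "r l \<le> r (p l)" if "l \<in> {0..<n}" for l
      using tri[of l "p l"] nz[of l] that permutes_in_image[OF pp, of l]
      by (cases "p l = l") auto
    have "(\<Sum>l = 0..<n. r l) < (\<Sum>l = 0..<n. r (p l))"
      apply (rule sum_strict_mono_ex1)
      using le tri[of l0 "p l0"] nz[OF l0] \<open>p l0 \<noteq> l0\<close> l0 permutes_in_image[OF pp, of l0] by auto
    also have "\<dots> = (\<Sum>l = 0..<n. r l)"
      using sum.permute[OF pp, of r] by (simp add: comp_def)
    finally show False by simp
  qed
  have "det M = (\<Sum>p\<in>?P. signof p * (\<Prod>l = 0..<n. M $$ (l, p l)))"
    by (rule det_def'[OF M])
  also have "\<dots> = signof (id::nat\<Rightarrow>nat) * (\<Prod>l = 0..<n. M $$ (l, id l))"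
    apply (subst sum.remove[of _ id])
    using z by (auto simp: permutes_id finite_permutations)
  finally show ?thesis by simp
qed

definition rowrep :: "'a::comm_ring_1 mat \<Rightarrow> nat \<Rightarrow> nat \<Rightarrow> 'a mat" where
  "rowrep M j i = mat (dim_row M) (dim_col M) (\<lambda>(a,b). if a = j then (if b = i then 1 else 0) else M $$ (a,b))"

lemma rowrep_carrier[simp]: "M \<in> carrier_mat n n \<Longrightarrow> rowrep M j i \<in> carrier_mat n n"
  by (simp add: rowrep_def)

lemma rowrep_index: "a < dim_row M \<Longrightarrow> b < dim_col M \<Longrightarrow>
  rowrep M j i $$ (a,b) = (if a = j then (if b = i then 1 else 0) else M $$ (a,b))"
  by (simp add: rowrep_def)

lemma cofactor_rowrep:
  fixes M :: "'a::comm_ring_1 mat"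
  assumes M: "M \<in> carrier_mat n n" and j: "j < n" and i: "i < n"
  shows "det (rowrep M j i) = cofactor M j i"
proof -
  let ?R = "rowrep M j i"
  have R: "?R \<in> carrier_mat n n" using M by simp
  have d: "dim_row M = n" "dim_col M = n" using M by auto
  have "det ?R = (\<Sum>b<n. ?R $$ (j,b) * cofactor ?R j b)"
    by (rule laplace_expansion_row[OF R j])
  also have "\<dots> = (\<Sum>b<n. if b = i then cofactor ?R j b else 0)"
  proof (rule sum.cong)
    fix b assume "b \<in> {..<n}"
    then have "?R $$ (j,b) = (if b = i then 1 else 0)" using d j by (simp add: rowrep_index)
    then show "?R $$ (j,b) * cofactor ?R j b = (if b = i then cofactor ?R j b else 0)" by simp
  qed simp
  also have "\<dots> = cofactor ?R j i" using i by simp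
  also have "mat_delete ?R j i = mat_delete M j i"
  proof (rule eq_matI)
    fix a b assume "a < dim_row (mat_delete M j i)" "b < dim_col (mat_delete M j i)"
    then have "a < n - 1" "b < n - 1" using d by auto
    then show "mat_delete ?R j i $$ (a, b) = mat_delete M j i $$ (a, b)"
      unfolding mat_delete_def using d j \<open>a < n - 1\<close> \<open>b < n - 1\<close> R by (simp add: rowrep_index)
  qed (simp_all add: rowrep_def)
  then have "cofactor ?R j i = cofactor M j i" by (simp add: cofactor_def)
  finally show ?thesis .
qed

lemma (in comm_ring_hom) rowrep_hom: "map_mat hom (rowrep M j i) = rowrep (map_mat hom M) j i"
  by (rule eq_matI) (auto simp: rowrep_def)

lemma det_degree_bound:
  fixes M :: "'a::comm_ring_1 poly mat" and D :: "nat \<Rightarrow> nat"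
  assumes M: "M \<in> carrier_mat n n" and j: "j < n" and i: "i < n"
   and degs: "\<And>a b. a < n \<Longrightarrow> b < n \<Longrightarrow> degree (M $$ (a,b)) \<le> (if a = b \<and> a \<noteq> j then 1 else 0)"
   and rowj: "\<And>b. b < n \<Longrightarrow> b \<noteq> i \<Longrightarrow> M $$ (j,b) = 0"
   and step: "\<And>a b. a < n \<Longrightarrow> b < n \<Longrightarrow> a \<noteq> b \<Longrightarrow> a \<noteq> j \<Longrightarrow> M $$ (a,b) \<noteq> 0 \<Longrightarrow> D a \<le> D b + 1"
   and Dj: "D j = 0"
  shows "degree (det M) \<le> n - 1 - D i"
proof -
  let ?P = "{p. p permutes {0..<n}}"
  have "degree (signof p * (\<Prod>l = 0..<n. M $$ (l, p l))) \<le> n - 1 - D i" if p: "p \<in> ?P" for p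
  proof (cases "(\<Prod>l = 0..<n. M $$ (l, p l)) = 0")
    case True then show ?thesis by simp
  next
    case False
    have pp: "p permutes {0..<n}" using p by simp
    have pin: "l < n \<Longrightarrow> p l < n" for l using permutes_in_image[OF pp] by simp
    have nz: "M $$ (l, p l) \<noteq> 0" if "l < n" for l
    proof
      assume "M $$ (l, p l) = 0"
      then have "(\<Prod>l = 0..<n. M $$ (l, p l)) = 0" by (intro prod_zero) (use that in auto)
      with False show False by simp
    qed
    have pj: "p j = i" using nz[OF j] rowj[OF pin[OF j]] by auto
    define S where "S = {0..<n} - {j}"
    have finS: "finite S" and cardS: "card S = n - 1" using j by (auto simp: S_def)
    have deg1: "degree (\<Prod>l = 0..<n. M $$ (l, p l)) \<le> (\<Sum>l = 0..<n. if p l = l \<and> l \<noteq> j then 1 else 0)"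
    proof (rule order.trans[OF degree_prod_sum_le], simp, rule sum_mono)
      fix l assume "l \<in> {0..<n}"
      then show "(degree \<circ> (\<lambda>l. M $$ (l, p l))) l \<le> (if p l = l \<and> l \<noteq> j then 1 else 0)"
        using degs[of l "p l"] pin[of l] by (auto split: if_splits)
    qed
    also have "\<dots> = (\<Sum>l\<in>S. if p l = l then 1 else 0)"
      unfolding S_def using j by (intro sum.mono_neutral_cong_right) auto
    finally have deg2: "degree (\<Prod>l = 0..<n. M $$ (l, p l)) \<le> (\<Sum>l\<in>S. if p l = l then 1 else 0)" .
    have "(\<Sum>l = 0..<n. int (D (p l))) = (\<Sum>l = 0..<n. int (D l))"
      using sum.permute[OF pp, of "\<lambda>l. int (D l)"] by (simp add: comp_def)
    then have "0 = (\<Sum>l = 0..<n. int (D l) - int (D (p l)))" by (simp add: sum_subtractf)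
    also have "\<dots> = (int (D j) - int (D (p j))) + (\<Sum>l\<in>S. int (D l) - int (D (p l)))"
      unfolding S_def using j by (subst sum.remove[of _ j]) auto
    also have "\<dots> \<le> - int (D i) + (\<Sum>l\<in>S. if p l = l then 0 else 1)"
    proof -
      have "int (D l) - int (D (p l)) \<le> (if p l = l then 0 else 1)" if "l \<in> S" for l
      proof (cases "p l = l")
        case False
        have "l < n" "l \<noteq> j" using that by (auto simp: S_def)
        then show ?thesis using step[OF \<open>l < n\<close> pin[OF \<open>l < n\<close>] _ _ nz[OF \<open>l < n\<close>]] False by auto
      qed simp
      then show ?thesis using Dj pj by (auto intro!: sum_mono)
    qed
    finally have A: "int (D i) \<le> (\<Sum>l\<in>S. if p l = l then 0 else 1)" by simp
    have B: "(\<Sum>l\<in>S. if p l = l then 1 else 0) + (\<Sum>l\<in>S. if p l = l then 0 else 1) = (n - 1 :: nat)"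
      using cardS by (simp add: sum.distrib[symmetric] if_distrib cong: if_cong)
    have "(\<Sum>l\<in>S. if p l = l then 1 else 0) \<le> n - 1 - D i"
    proof -
      have "int (\<Sum>l\<in>S. if p l = l then 0 else 1) = (\<Sum>l\<in>S. if p l = l then 0 else 1)"
        by (simp add: of_nat_sum if_distrib cong: if_cong)
      then show ?thesis using A B by linarith
    qed
    then show ?thesis using deg2 by simp
  qed
  then show ?thesis
    unfolding det_def'[OF M] by (intro degree_sum_le) (auto simp: finite_permutations)
qed

lemma pm1_prod:
  fixes f :: "'b \<Rightarrow> 'a::comm_ring_1"
  shows "finite S \<Longrightarrow> (\<forall>x\<in>S. f x = 1 \<or> f x = -1) \<Longrightarrow> prod f S = 1 \<or> prod f S = -1"
proof (induct S rule: finite_induct)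
  case (insert x F)
  then have "prod f F = 1 \<or> prod f F = -1" "f x = 1 \<or> f x = -1" by auto
  then show ?case using insert by auto
qed simp

context
  fixes n \<rho> :: nat and par d :: "nat \<Rightarrow> nat"
  assumes rho: "\<rho> < n" and drho: "d \<rho> = 0"
    and parP: "\<And>x. x < n \<Longrightarrow> x \<noteq> \<rho> \<Longrightarrow> par x < n \<and> d (par x) + 1 = d x"
begin

definition TN :: "int \<Rightarrow> int poly mat" where
  "TN c = mat n n (\<lambda>(a,b). if a = b then (if a = \<rho> then [:c,1:] else [:1,1:])
      else if b \<noteq> \<rho> \<and> a = par b then -1 else 0)"

lemma TN_carrier[simp]: "TN c \<in> carrier_mat n n" by (simp add: TN_def)
lemma TN_dims[simp]: "dim_row (TN c) = n" "dim_col (TN c) = n" by (simp_all add: TN_def)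

lemma TN_index: "a < n \<Longrightarrow> b < n \<Longrightarrow> TN c $$ (a,b) = (if a = b then (if a = \<rho> then [:c,1:] else [:1,1:])
      else if b \<noteq> \<rho> \<and> a = par b then -1 else 0)"
  by (simp add: TN_def)

lemma TN_tri: "a < n \<Longrightarrow> b < n \<Longrightarrow> a \<noteq> b \<Longrightarrow> TN c $$ (a,b) \<noteq> 0 \<Longrightarrow> d a < d b"
  using parP[of b] by (auto simp: TN_index split: if_splits)

lemma prod_rest: "(\<Prod>l\<in>{0..<n} - {\<rho>}. TN c $$ (l,l)) = [:1,1:] ^ (n - 1)"
proof -
  have "(\<Prod>l\<in>{0..<n} - {\<rho>}. TN c $$ (l,l)) = (\<Prod>l\<in>{0..<n} - {\<rho>}. [:1,1:])"
    by (rule prod.cong) (auto simp: TN_index)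
  also have "\<dots> = [:1,1:] ^ (n - 1)" using rho by simp
  finally show ?thesis .
qed

lemma tree_det: "det (TN c) = [:c,1:] * [:1,1:] ^ (n - 1)"
proof -
  have "det (TN c) = (\<Prod>l = 0..<n. TN c $$ (l,l))"
    by (rule det_rank_tri[OF TN_carrier, where r = d]) (rule TN_tri)
  also have "\<dots> = TN c $$ (\<rho>,\<rho>) * (\<Prod>l\<in>{0..<n} - {\<rho>}. TN c $$ (l,l))"
    using rho by (subst prod.remove[of _ \<rho>]) auto
  finally show ?thesis using rho by (simp add: prod_rest TN_index)
qed

lemma tree_det_rowrep_same: "det (rowrep (TN c) \<rho> \<rho>) = [:1,1:] ^ (n - 1)"
proof -
  have R: "rowrep (TN c) \<rho> \<rho> \<in> carrier_mat n n" by simp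
  have idx: "a < n \<Longrightarrow> b < n \<Longrightarrow> rowrep (TN c) \<rho> \<rho> $$ (a,b) =
     (if a = \<rho> then (if b = \<rho> then 1 else 0) else TN c $$ (a,b))" for a b
    by (simp add: rowrep_index)
  have "det (rowrep (TN c) \<rho> \<rho>) = (\<Prod>l = 0..<n. rowrep (TN c) \<rho> \<rho> $$ (l,l))"
    by (rule det_rank_tri[OF R, of d]) (auto simp: idx intro: TN_tri split: if_splits)
  also have "\<dots> = rowrep (TN c) \<rho> \<rho> $$ (\<rho>,\<rho>) * (\<Prod>l\<in>{0..<n} - {\<rho>}. rowrep (TN c) \<rho> \<rho> $$ (l,l))"
    using rho by (subst prod.remove[of _ \<rho>]) auto
  also have "(\<Prod>l\<in>{0..<n} - {\<rho>}. rowrep (TN c) \<rho> \<rho> $$ (l,l)) = (\<Prod>l\<in>{0..<n} - {\<rho>}. TN c $$ (l,l))"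
    by (rule prod.cong) (auto simp: idx)
  finally show ?thesis using rho by (simp add: prod_rest idx)
qed


lemma zero_rho: "x < n \<Longrightarrow> d x = 0 \<Longrightarrow> x = \<rho>"
  using parP[of x] by force

lemma tree_det_cycle:
  assumes j: "j < n" and jr: "j \<noteq> \<rho>"
  shows "d j + 1 \<le> n \<and> (\<exists>s::int poly. (s = 1 \<or> s = -1) \<and> det (rowrep (TN c) j \<rho>) = s * [:1,1:] ^ (n - 1 - d j))"
proof -
  define L where "L = d j"
  define p where "p t = (par ^^ t) j" for t
  have pS: "p (Suc t) = par (p t)" for t by (simp add: p_def)
  have p0: "p 0 = j" by (simp add: p_def)
  have pt: "t \<le> L \<Longrightarrow> p t < n \<and> d (p t) = L - t" for t
  proof (induct t)
    case 0 then show ?case using j by (simp add: p0 L_def)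
  next
    case (Suc t)
    then have "p t < n" "d (p t) = L - t" by auto
    moreover have "p t \<noteq> \<rho>" using Suc.prems \<open>d (p t) = L - t\<close> drho by auto
    ultimately have "par (p t) < n" "Suc (d (par (p t))) = L - t" using parP[of "p t"] by auto
    then show ?case by (simp add: pS)
  qed
  have pL: "p L = \<rho>" using pt[of L] zero_rho by auto
  have pinj: "s \<le> L \<Longrightarrow> t \<le> L \<Longrightarrow> p s = p t \<Longrightarrow> s = t" for s t
    using pt[of s] pt[of t] by auto
  have injp: "inj_on p {0..L}" by (rule inj_onI) (auto intro: pinj)
  have PSsub: "p ` {0..L} \<subseteq> {0..<n}" using pt by auto
  have cardPS: "card (p ` {0..L}) = L + 1" using card_image[OF injp] by simp
  have Ln: "L + 1 \<le> n" using card_mono[OF _ PSsub] cardPS by simp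
  define cs where "cs = map (\<lambda>s. p (L - s)) [0..<Suc L]"
  have lcs: "length cs = Suc L" by (simp add: cs_def)
  have csn: "s < Suc L \<Longrightarrow> cs ! s = p (L - s)" for s by (simp add: cs_def del: upt_Suc)
  have dcs: "distinct cs"
  proof -
    have "inj_on (\<lambda>s. p (L - s)) {0..<Suc L}"
    proof (rule inj_onI)
      fix x y assume "x \<in> {0..<Suc L}" "y \<in> {0..<Suc L}" "p (L - x) = p (L - y)"
      then have "L - x = L - y" using pinj[of "L - x" "L - y"] by auto
      then show "x = y" using \<open>x \<in> _\<close> \<open>y \<in> _\<close> by auto
    qed
    then show ?thesis unfolding cs_def distinct_map by (simp del: upt_Suc)
  qed
  have setcs: "set cs = p ` {0..L}"
  proof
    show "set cs \<subseteq> p ` {0..L}" by (auto simp: cs_def)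
    show "p ` {0..L} \<subseteq> set cs"
    proof
      fix x assume "x \<in> p ` {0..L}"
      then obtain t where t: "t \<le> L" "x = p t" by auto
      then have "x = cs ! (L - t)" using csn[of "L - t"] by auto
      then show "x \<in> set cs" using lcs t by auto
    qed
  qed
  define s0 where "s0 = cycle_of_list cs"
  have s0perm: "s0 permutes {0..<n}"
    using cycle_permutes[of cs] setcs PSsub unfolding s0_def by (metis permutes_subset)
  have rot: "s0 (cs ! s) = cs ! (Suc s mod Suc L)" if "s < Suc L" for s
  proof -
    have "map (s0 ^^ 1) cs = rotate 1 cs" unfolding s0_def by (rule cyclic_rotation) (use dcs in simp)
    then have "map s0 cs ! s = rotate1 cs ! s" by simp
    then show ?thesis using that lcs by (simp add: nth_rotate1)
  qed
  have s0j: "s0 j = \<rho>"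
    using rot[of L] csn[of L] csn[of 0] p0 pL by simp
  have s0S: "s0 (p (Suc t)) = p t" if "t < L" for t
  proof -
    have "s0 (cs ! (L - Suc t)) = cs ! (Suc (L - Suc t) mod Suc L)" by (rule rot) (use that in simp)
    moreover have "cs ! (L - Suc t) = p (Suc t)" using csn[of "L - Suc t"] that by (simp add: Suc_diff_Suc)
    moreover have "Suc (L - Suc t) mod Suc L = L - t" using that by simp
    moreover have "cs ! (L - t) = p t" using csn[of "L - t"] that by simp
    ultimately show ?thesis by simp
  qed
  have s0out: "x \<notin> p ` {0..L} \<Longrightarrow> s0 x = x" for x
    unfolding s0_def using id_outside_supp[of x cs] setcs by simp
  let ?R = "rowrep (TN c) j \<rho>"
  have R: "?R \<in> carrier_mat n n" by simp
  have idx: "a < n \<Longrightarrow> b < n \<Longrightarrow> ?R $$ (a,b) = (if a = j then (if b = \<rho> then 1 else 0) else TN c $$ (a,b))" for a b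
    by (simp add: rowrep_index)
  have uniq: "\<sigma> = s0" if sp: "\<sigma> permutes {0..<n}" and nz: "\<And>l. l < n \<Longrightarrow> ?R $$ (l, \<sigma> l) \<noteq> 0" for \<sigma>
  proof -
    have sin: "l < n \<Longrightarrow> \<sigma> l < n" for l using permutes_in_image[OF sp] by simp
    have \<sigma>j: "\<sigma> j = \<rho>" using nz[OF j] idx[OF j sin[OF j]] by (auto split: if_splits)
    have nf: "\<sigma> l \<noteq> \<rho> \<and> l = par (\<sigma> l)" if "l < n" "l \<noteq> j" "\<sigma> l \<noteq> l" for l
      using nz[OF that(1)] idx[OF that(1) sin[OF that(1)]] TN_index[OF that(1) sin[OF that(1)]] that
      by (auto split: if_splits)
    have core: "\<sigma> (p (Suc t)) = p t" if tL: "t < L" and nfix: "\<sigma> (p t) \<noteq> p t" for t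
    proof -
      obtain l where l: "\<sigma> l = p t" using sp unfolding permutes_def by metis
      have ptn: "p t < n" using pt[of t] tL by simp
      have ln: "l < n"
      proof (rule ccontr)
        assume "\<not> l < n"
        then have "\<sigma> l = l" using sp permutes_not_in by fastforce
        then show False using l ptn \<open>\<not> l < n\<close> by simp
      qed
      have lj: "l \<noteq> j"
      proof
        assume "l = j"
        then have "p t = p L" using l \<sigma>j pL by simp
        then show False using pinj[of t L] tL by simp
      qed
      have "\<sigma> l \<noteq> l" using l nfix by auto
      then have "l = par (p t)" using nf[OF ln lj] l by simp
      then show ?thesis using l by (simp add: pS)
    qed
    have chain: "t < L \<Longrightarrow> \<sigma> (p (Suc t)) = p t" for t
    proof (induct t)
      case 0 then show ?case using core[of 0] \<sigma>j p0 jr by simp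
    next
      case (Suc t)
      then have "\<sigma> (p (Suc t)) = p t" by simp
      moreover have "p t \<noteq> p (Suc t)" using pinj[of t "Suc t"] Suc.prems by auto
      ultimately show ?case using core[of "Suc t"] Suc.prems by simp
    qed
    define S where "S = {0..<n} - {j}"
    have fS: "finite S" by (simp add: S_def)
    have fl: "int (d (\<sigma> l)) - int (d l) = (if \<sigma> l \<noteq> l then 1 else 0)" if "l \<in> S" for l
    proof (cases "\<sigma> l = l")
      case False
      have "l < n" "l \<noteq> j" using that by (auto simp: S_def)
      then have "\<sigma> l \<noteq> \<rho>" "l = par (\<sigma> l)" using nf False by auto
      then have "d l + 1 = d (\<sigma> l)" using parP[OF sin[OF \<open>l < n\<close>]] by simp
      then show ?thesis using False by simp
    qed simp
    have "(\<Sum>l = 0..<n. int (d (\<sigma> l))) = (\<Sum>l = 0..<n. int (d l))"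
      using sum.permute[OF sp, of "\<lambda>l. int (d l)"] by (simp add: comp_def)
    then have "0 = (\<Sum>l = 0..<n. int (d (\<sigma> l)) - int (d l))" by (simp add: sum_subtractf)
    also have "\<dots> = (int (d (\<sigma> j)) - int (d j)) + (\<Sum>l\<in>S. int (d (\<sigma> l)) - int (d l))"
      unfolding S_def using j by (subst sum.remove[of _ j]) auto
    also have "(\<Sum>l\<in>S. int (d (\<sigma> l)) - int (d l)) = (\<Sum>l\<in>S. if \<sigma> l \<noteq> l then 1 else 0)"
      by (rule sum.cong) (auto simp: fl)
    also have "\<dots> = (\<Sum>l\<in>{l\<in>S. \<sigma> l \<noteq> l}. 1)"
      using sum.inter_filter[OF fS, of "\<lambda>_. (1::int)" "\<lambda>l. \<sigma> l \<noteq> l"] by simp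
    finally have cardNF: "card {l\<in>S. \<sigma> l \<noteq> l} = L" using \<sigma>j drho by (simp add: L_def)
    have Tsub: "p ` {1..L} \<subseteq> {l\<in>S. \<sigma> l \<noteq> l}"
    proof
      fix x assume "x \<in> p ` {1..L}"
      then obtain u where u: "1 \<le> u" "u \<le> L" "x = p u" by auto
      then obtain t where t: "u = Suc t" "t < L" by (cases u) auto
      have "x < n" using pt u by auto
      moreover have "x \<noteq> j" using pinj[of u 0] u p0 by auto
      moreover have "\<sigma> x \<noteq> x" using chain[OF t(2)] pinj[of t u] t u by auto
      ultimately show "x \<in> {l\<in>S. \<sigma> l \<noteq> l}" by (simp add: S_def)
    qed
    have "card (p ` {1..L}) = L"
      using card_image[OF inj_on_subset[OF injp, of "{1..L}"]] by auto
    then have Teq: "p ` {1..L} = {l\<in>S. \<sigma> l \<noteq> l}"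
      using card_subset_eq[OF _ Tsub] fS cardNF by auto
    show "\<sigma> = s0"
    proof
      fix x
      show "\<sigma> x = s0 x"
      proof (cases "x < n")
        case False
        then show ?thesis using permutes_not_in[OF sp] permutes_not_in[OF s0perm] by auto
      next
        case xn: True
        show ?thesis
        proof (cases "x \<in> p ` {0..L}")
          case True
          then obtain u where u: "u \<le> L" "x = p u" by auto
          show ?thesis
          proof (cases u)
            case 0 then show ?thesis using u \<sigma>j s0j p0 by simp
          next
            case (Suc t) then show ?thesis using u chain[of t] s0S[of t] by simp
          qed
        next
          case False
          then have "x \<noteq> j" using p0 by force
          moreover have "x \<notin> p ` {1..L}" using False by auto
          ultimately have "\<sigma> x = x" using Teq xn by (auto simp: S_def)
          then show ?thesis using s0out[OF False] by simp
        qed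
      qed
    qed
  qed
  let ?P = "{p. p permutes {0..<n}}"
  have z: "signof \<sigma> * (\<Prod>l = 0..<n. ?R $$ (l, \<sigma> l)) = 0" if "\<sigma> \<in> ?P - {s0}" for \<sigma>
  proof (rule ccontr)
    assume ne: "signof \<sigma> * (\<Prod>l = 0..<n. ?R $$ (l, \<sigma> l)) \<noteq> 0"
    have "?R $$ (l, \<sigma> l) \<noteq> 0" if "l < n" for l
    proof
      assume "?R $$ (l, \<sigma> l) = 0"
      then have "(\<Prod>l = 0..<n. ?R $$ (l, \<sigma> l)) = 0" by (intro prod_zero) (use that in auto)
      with ne show False by simp
    qed
    then have "\<sigma> = s0" using uniq that by auto
    then show False using that by simp
  qed
  have "det ?R = (\<Sum>\<sigma>\<in>?P. signof \<sigma> * (\<Prod>l = 0..<n. ?R $$ (l, \<sigma> l)))"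
    by (rule det_def'[OF R])
  also have "\<dots> = signof s0 * (\<Prod>l = 0..<n. ?R $$ (l, s0 l)) + (\<Sum>\<sigma>\<in>?P - {s0}. signof \<sigma> * (\<Prod>l = 0..<n. ?R $$ (l, \<sigma> l)))"
    by (rule sum.remove) (auto simp: finite_permutations s0perm)
  also have "(\<Sum>\<sigma>\<in>?P - {s0}. signof \<sigma> * (\<Prod>l = 0..<n. ?R $$ (l, \<sigma> l))) = 0"
    by (rule sum.neutral) (use z in blast)
  also have "(\<Prod>l = 0..<n. ?R $$ (l, s0 l)) =
      (\<Prod>l\<in>{0..<n} - p ` {0..L}. ?R $$ (l, s0 l)) * (\<Prod>l\<in>p ` {0..L}. ?R $$ (l, s0 l))"
    by (rule prod.subset_diff[OF PSsub]) simp
  also have "(\<Prod>l\<in>{0..<n} - p ` {0..L}. ?R $$ (l, s0 l)) = (\<Prod>l\<in>{0..<n} - p ` {0..L}. [:1,1:])"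
  proof (rule prod.cong)
    fix l assume l: "l \<in> {0..<n} - p ` {0..L}"
    then have "l \<noteq> j" "l \<noteq> \<rho>" using p0 pL by force+
    then show "?R $$ (l, s0 l) = [:1,1:]" using l s0out[of l] by (simp add: idx TN_index)
  qed simp
  also have "\<dots> = [:1,1:] ^ (n - 1 - L)"
    using card_Diff_subset[OF _ PSsub] cardPS by simp
  finally have detR: "det ?R = signof s0 * ([:1,1:] ^ (n - 1 - L) * (\<Prod>l\<in>p ` {0..L}. ?R $$ (l, s0 l)))" by simp
  have u: "(\<Prod>l\<in>p ` {0..L}. ?R $$ (l, s0 l)) = 1 \<or> (\<Prod>l\<in>p ` {0..L}. ?R $$ (l, s0 l)) = -1"
  proof (rule pm1_prod, simp, rule ballI)
    fix x assume "x \<in> p ` {0..L}"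
    then obtain u where u: "u \<le> L" "x = p u" by auto
    show "?R $$ (x, s0 x) = 1 \<or> ?R $$ (x, s0 x) = -1"
    proof (cases u)
      case 0 then show ?thesis using u s0j p0 j rho by (simp add: idx)
    next
      case (Suc t)
      then have tL: "t < L" using u by simp
      have ne1: "p (Suc t) \<noteq> j" using pinj[of "Suc t" 0] u Suc p0 by auto
      have ne2: "p (Suc t) \<noteq> p t" using pinj[of "Suc t" t] u Suc by auto
      have ne3: "p t \<noteq> \<rho>" using pinj[of t L] tL pL by auto
      have lt: "p (Suc t) < n" "p t < n" using pt[of "Suc t"] pt[of t] u Suc by auto
      show ?thesis using u Suc s0S[OF tL] ne1 ne2 ne3 lt by (simp add: idx TN_index pS)
    qed
  qed
  have sg: "(signof s0 :: int poly) = 1 \<or> signof s0 = -1" by (cases rule: sign_cases[of s0]) auto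
  show ?thesis
  proof (intro conjI exI)
    show "d j + 1 \<le> n" using Ln by (simp add: L_def)
    show "signof s0 * (\<Prod>l\<in>p ` {0..L}. ?R $$ (l, s0 l)) = 1 \<or> signof s0 * (\<Prod>l\<in>p ` {0..L}. ?R $$ (l, s0 l)) = -1"
      using sg u by auto
    show "det ?R = signof s0 * (\<Prod>l\<in>p ` {0..L}. ?R $$ (l, s0 l)) * [:1,1:] ^ (n - 1 - d j)"
      using detR by (simp add: L_def mult_ac)
  qed
qed

end

lemma comp_carrier[simp]: "comp_matrix n E Lk \<in> carrier_mat n n"
  by (simp add: comp_matrix_def)

lemma comp_dims[simp]: "dim_row (comp_matrix n E Lk) = n" "dim_col (comp_matrix n E Lk) = n"
  by (simp_all add: comp_matrix_def)

lemma op_cpm: "op_matrix n E Lk = char_poly_matrix (comp_matrix n E Lk)"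
  by (rule eq_matI) (auto simp: op_matrix_def char_poly_matrix_def comp_matrix_def monom_Suc)

lemma ev_op: "map_mat (map_poly (ev v)) (op_matrix n E Lk) = char_poly_matrix (map_mat (ev v) (comp_matrix n E Lk))"
  unfolding op_cpm by (rule evh.char_poly_matrix_hom[symmetric, where n=n]) simp

lemma ev_A: "a < n \<Longrightarrow> b < n \<Longrightarrow> ev v (comp_matrix n E Lk $$ (a,b)) =
  (if a = b then - (\<Sum>k'\<in>{k'. (a,k') \<in> E}. v (EdgeP k' a)) - (if a \<in> Lk then v (LeakP a) else 0)
   else if (b,a) \<in> E then v (EdgeP a b) else 0)"
  by (simp add: comp_matrix_def evh.hom_uminus evh.hom_minus evh.hom_sum if_distrib[of "ev v"])

lemma cpm_index: "A \<in> carrier_mat n n \<Longrightarrow> a < n \<Longrightarrow> b < n \<Longrightarrow>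
   char_poly_matrix A $$ (a,b) = (if a = b then [:0,1:] else 0) + [:- A $$ (a,b):]"
  by (auto simp: char_poly_matrix_def)

lemma cpm_ev_index: "a < n \<Longrightarrow> b < n \<Longrightarrow>
   char_poly_matrix (map_mat (ev v) (comp_matrix n E Lk)) $$ (a,b) =
   (if a = b then [:0,1:] else 0) + [:- ev v (comp_matrix n E Lk $$ (a,b)):]"
  by (subst cpm_index[where n=n]) auto

definition vT :: "nat \<Rightarrow> (nat \<Rightarrow> nat) \<Rightarrow> bool \<Rightarrow> param \<Rightarrow> int" where
  "vT \<rho> par cf p = (case p of EdgeP a b \<Rightarrow> if b \<noteq> \<rho> \<and> a = par b then 1 else 0
                           | LeakP l \<Rightarrow> if l = \<rho> \<and> cf then 1 else 0)"

lemma spec_tree: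
  fixes d :: "nat \<Rightarrow> nat"
  assumes E: "E \<subseteq> {0..<n} \<times> {0..<n}" and rho: "\<rho> < n" and drho: "d \<rho> = 0"
    and parP: "\<And>x. x < n \<Longrightarrow> x \<noteq> \<rho> \<Longrightarrow> par x < n \<and> d (par x) + 1 = d x"
    and parE: "\<And>x. x < n \<Longrightarrow> x \<noteq> \<rho> \<Longrightarrow> (x, par x) \<in> E"
  shows "map_mat (map_poly (ev (vT \<rho> par cf))) (op_matrix n E Lk) = TN n \<rho> par (if \<rho> \<in> Lk \<and> cf then 1 else 0)"
proof (rule eq_matI)
  fix a b assume "a < dim_row (TN n \<rho> par (if \<rho> \<in> Lk \<and> cf then 1 else 0))"
    "b < dim_col (TN n \<rho> par (if \<rho> \<in> Lk \<and> cf then 1 else 0))"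
  then have ab: "a < n" "b < n" using TN_dims[where n=n and \<rho>=\<rho> and par=par and d=d, OF rho drho parP] by auto
  have fin: "finite {k'. (a,k') \<in> E}" using E by (auto intro: finite_subset[of _ "{0..<n}"])
  have sum: "(\<Sum>k'\<in>{k'. (a,k') \<in> E}. vT \<rho> par cf (EdgeP k' a)) = (if a \<noteq> \<rho> then 1 else 0)"
  proof (cases "a = \<rho>")
    case True then show ?thesis by (simp add: vT_def)
  next
    case False
    have "(\<Sum>k'\<in>{k'. (a,k') \<in> E}. vT \<rho> par cf (EdgeP k' a)) = (\<Sum>k'\<in>{k'. (a,k') \<in> E}. if par a = k' then 1 else 0)"
      using False by (intro sum.cong) (auto simp: vT_def)
    also have "\<dots> = 1" using fin parE[OF ab(1) False] by simp
    finally show ?thesis using False by simp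
  qed
  have "map_mat (map_poly (ev (vT \<rho> par cf))) (op_matrix n E Lk) $$ (a,b)
     = char_poly_matrix (map_mat (ev (vT \<rho> par cf)) (comp_matrix n E Lk)) $$ (a,b)"
    by (simp only: ev_op)
  also have "\<dots> = TN n \<rho> par (if \<rho> \<in> Lk \<and> cf then 1 else 0) $$ (a,b)"
    using ab parE[of b] sum
    by (auto simp: cpm_ev_index ev_A TN_index[where n=n and \<rho>=\<rho> and par=par and d=d, OF rho drho parP] vT_def)
  finally show "map_mat (map_poly (ev (vT \<rho> par cf))) (op_matrix n E Lk) $$ (a,b) =
      TN n \<rho> par (if \<rho> \<in> Lk \<and> cf then 1 else 0) $$ (a,b)" .
qed (auto simp: op_matrix_def TN_dims[where n=n and \<rho>=\<rho> and par=par and d=d, OF rho drho parP])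


lemma tree_exists:
  assumes E: "E \<subseteq> {0..<n} \<times> {0..<n}" and sc: "strongly_connected n E" and rho: "\<rho> < n"
  shows "\<exists>par (d::nat\<Rightarrow>nat). d \<rho> = 0 \<and>
     (\<forall>x. x < n \<longrightarrow> x \<noteq> \<rho> \<longrightarrow> par x < n \<and> d (par x) + 1 = d x \<and> (x, par x) \<in> E) \<and>
     (\<forall>x. d x = (LEAST k. (x,\<rho>) \<in> E ^^ k))"
proof -
  define d where "d x = (LEAST k. (x,\<rho>) \<in> E ^^ k)" for x
  have ex: "\<exists>k. (x,\<rho>) \<in> E ^^ k" if "x < n" for x
    using sc that rho unfolding strongly_connected_def by (auto simp: rtrancl_power)
  have dI: "(x,\<rho>) \<in> E ^^ (d x)" if "x < n" for x
    unfolding d_def using ex[OF that] by (rule LeastI_ex)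
  have dle: "(x,\<rho>) \<in> E ^^ k \<Longrightarrow> d x \<le> k" for x k
    unfolding d_def by (rule Least_le)
  have d0: "d \<rho> = 0" using dle[of \<rho> 0] by simp
  have step: "\<exists>y. (x,y) \<in> E \<and> y < n \<and> d y + 1 = d x" if x: "x < n" "x \<noteq> \<rho>" for x
  proof -
    have "d x \<noteq> 0" using dI[OF x(1)] x(2) by (cases "d x = 0") auto
    then obtain k where k: "d x = Suc k" by (cases "d x") auto
    then obtain y where y: "(x,y) \<in> E" "(y,\<rho>) \<in> E ^^ k"
      using relpow_Suc_D2[where x=x and z=\<rho> and R=E and n=k] dI[OF x(1)] k by auto
    have yn: "y < n" using y(1) E by auto
    have "d y \<le> k" using dle[OF y(2)] .
    moreover have "(x,\<rho>) \<in> E ^^ Suc (d y)" using relpow_Suc_I2[OF y(1) dI[OF yn]] .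
    then have "d x \<le> Suc (d y)" by (rule dle)
    ultimately show ?thesis using y yn k by (intro exI[of _ y]) auto
  qed
  define par where "par x = (SOME y. (x,y) \<in> E \<and> y < n \<and> d y + 1 = d x)" for x
  have "par x < n \<and> d (par x) + 1 = d x \<and> (x, par x) \<in> E" if "x < n" "x \<noteq> \<rho>" for x
    using someI_ex[OF step[OF that]] unfolding par_def by auto
  then show ?thesis using d0 by (intro exI[of _ par] exI[of _ d]) (auto simp: d_def)
qed

lemma nonconst_iff: "Poly_Mapping.lookup c 0 = 0 \<Longrightarrow> nonconst c \<longleftrightarrow> c \<noteq> 0"
proof
  assume "nonconst c" then show "c \<noteq> 0" unfolding nonconst_def by auto
next
  assume c0: "Poly_Mapping.lookup c 0 = 0" and "c \<noteq> 0"
  then obtain m where "Poly_Mapping.lookup c m \<noteq> 0" by (metis lookup_zero poly_mapping_eqI)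
  with c0 show "nonconst c" unfolding nonconst_def by (intro exI[of _ m]) auto
qed

lemma not_nonconst_0: "\<not> nonconst 0" by (simp add: nonconst_def)
lemma not_nonconst_1: "\<not> nonconst 1" by (simp add: nonconst_def lookup_one)

definition ZM :: "nat \<Rightarrow> int poly mat" where
  "ZM n = mat n n (\<lambda>(a,b). if a = b then [:0,1:] else 0)"

lemma spec_zero: "map_mat (map_poly (ev (\<lambda>_. 0))) (op_matrix n E Lk) = ZM n"
proof (rule eq_matI)
  fix a b assume "a < dim_row (ZM n)" "b < dim_col (ZM n)"
  then have ab: "a < n" "b < n" by (auto simp: ZM_def)
  have "map_mat (map_poly (ev (\<lambda>_. 0))) (op_matrix n E Lk) $$ (a,b)
     = char_poly_matrix (map_mat (ev (\<lambda>_. 0)) (comp_matrix n E Lk)) $$ (a,b)"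
    by (simp only: ev_op)
  also have "\<dots> = ZM n $$ (a,b)" using ab by (simp add: cpm_ev_index ev_A ZM_def)
  finally show "map_mat (map_poly (ev (\<lambda>_. 0))) (op_matrix n E Lk) $$ (a,b) = ZM n $$ (a,b)" .
qed (auto simp: op_matrix_def ZM_def)

lemma ZM_carrier[simp]: "ZM n \<in> carrier_mat n n" by (simp add: ZM_def)
lemma ZM_dims[simp]: "dim_row (ZM n) = n" "dim_col (ZM n) = n" by (simp_all add: ZM_def)

lemma det_ZM: "det (ZM n) = [:0,1:] ^ n"
proof -
  have "det (ZM n) = (\<Prod>l = 0..<n. ZM n $$ (l,l))"
    by (rule det_rank_tri[where r = "\<lambda>_. 0"]) (auto simp: ZM_def)
  then show ?thesis by (simp add: ZM_def)
qed

lemma det_ZM_same: "i < n \<Longrightarrow> det (rowrep (ZM n) i i) = [:0,1:] ^ (n - 1)"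
proof -
  assume i: "i < n"
  have "det (rowrep (ZM n) i i) = (\<Prod>l = 0..<n. rowrep (ZM n) i i $$ (l,l))"
    by (rule det_rank_tri[where r = "\<lambda>_. 0"]) (auto simp: ZM_def rowrep_index)
  also have "\<dots> = rowrep (ZM n) i i $$ (i,i) * (\<Prod>l\<in>{0..<n} - {i}. rowrep (ZM n) i i $$ (l,l))"
    using i by (subst prod.remove[of _ i]) auto
  also have "(\<Prod>l\<in>{0..<n} - {i}. rowrep (ZM n) i i $$ (l,l)) = (\<Prod>l\<in>{0..<n} - {i}. [:0,1:])"
    by (rule prod.cong) (auto simp: ZM_def rowrep_index)
  finally show ?thesis using i by (simp add: rowrep_index)
qed

lemma det_ZM_diff: "i < n \<Longrightarrow> j < n \<Longrightarrow> i \<noteq> j \<Longrightarrow> det (rowrep (ZM n) j i) = 0"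
proof -
  assume i: "i < n" and j: "j < n" and ij: "i \<noteq> j"
  have R: "rowrep (ZM n) j i \<in> carrier_mat n n" by simp
  have pz: "(\<Prod>l = 0..<n. rowrep (ZM n) j i $$ (l, p l)) = 0" if p: "p permutes {0..<n}" for p
  proof (cases "p j = i")
    case False
    have "rowrep (ZM n) j i $$ (j, p j) = 0" using False j permutes_in_image[OF p, of j]
      by (simp add: rowrep_index)
    then show ?thesis using j by (intro prod_zero) auto
  next
    case True
    then have "p i \<noteq> i" using ij permutes_inj[OF p] by (metis injD)
    then have "rowrep (ZM n) j i $$ (i, p i) = 0" using ij i permutes_in_image[OF p, of i]
      by (simp add: rowrep_index ZM_def)
    then show ?thesis using i by (intro prod_zero) auto
  qed
  show ?thesis unfolding det_def'[OF R] by (intro sum.neutral ballI) (simp add: pz)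
qed


lemma det_zero_row:
  fixes M :: "'a::comm_ring_1 mat"
  assumes M: "M \<in> carrier_mat n n" and r: "r < n" and z: "\<And>b. b < n \<Longrightarrow> M $$ (r,b) = 0"
  shows "det M = 0"
proof -
  have pz: "(\<Prod>l = 0..<n. M $$ (l, p l)) = 0" if p: "p permutes {0..<n}" for p
    using r z[of "p r"] permutes_in_image[OF p, of r] by (intro prod_zero) auto
  show ?thesis unfolding det_def'[OF M] by (intro sum.neutral ballI) (simp add: pz)
qed

lemma colsum_zero:
  assumes E: "E \<subseteq> {0..<n} \<times> {0..<n}" and loops: "\<forall>v. (v,v) \<notin> E" and b: "b < n"
  shows "(\<Sum>a = 0..<n. comp_matrix n E {} $$ (a,b)) = 0"
proof -
  have "(\<Sum>a = 0..<n. comp_matrix n E {} $$ (a,b)) =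
     comp_matrix n E {} $$ (b,b) + (\<Sum>a\<in>{0..<n} - {b}. comp_matrix n E {} $$ (a,b))"
    using b by (subst sum.remove[of _ b]) auto
  also have "(\<Sum>a\<in>{0..<n} - {b}. comp_matrix n E {} $$ (a,b)) =
      (\<Sum>a\<in>{0..<n} - {b}. if (b,a) \<in> E then pvar (EdgeP a b) else 0)"
    by (rule sum.cong) (use b in \<open>auto simp: comp_matrix_def\<close>)
  also have "\<dots> = (\<Sum>a\<in>{a\<in>{0..<n} - {b}. (b,a) \<in> E}. pvar (EdgeP a b))"
    by (rule sum.inter_filter[symmetric]) simp
  also have "{a\<in>{0..<n} - {b}. (b,a) \<in> E} = {k'. (b,k') \<in> E}" using E loops by auto
  finally show ?thesis using b by (simp add: comp_matrix_def)
qed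

lemma coeff0_noleak:
  assumes E: "E \<subseteq> {0..<n} \<times> {0..<n}" and loops: "\<forall>v. (v,v) \<notin> E" and n: "n \<ge> 1"
  shows "coeff (det (op_matrix n E {})) 0 = 0"
proof -
  let ?A = "comp_matrix n E {}"
  define B where "B = map_mat (\<lambda>p. poly p 0) (op_matrix n E {})"
  have B: "B \<in> carrier_mat n n" by (simp add: B_def op_matrix_def)
  have Bidx: "a < n \<Longrightarrow> b < n \<Longrightarrow> B $$ (a,b) = - ?A $$ (a,b)" for a b
    by (simp add: B_def op_matrix_def monom_Suc)
  define U :: "ppoly mat" where "U = mat n n (\<lambda>(a,b). if a = 0 then 1 else if a = b then 1 else 0)"
  have U: "U \<in> carrier_mat n n" by (simp add: U_def)
  have "det U = (\<Prod>l = 0..<n. U $$ (l,l))"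
    by (rule det_rank_tri[OF U, where r = id]) (auto simp: U_def split: if_splits)
  also have "\<dots> = (\<Prod>l = 0..<n. 1)" by (rule prod.cong) (auto simp: U_def)
  finally have dU: "det U = 1" by simp
  have "det (U * B) = 0"
  proof (rule det_zero_row[where r = 0])
    show "U * B \<in> carrier_mat n n" using U B by simp
    show "0 < n" using n by simp
    fix b assume b: "b < n"
    have "(U * B) $$ (0,b) = (\<Sum>k = 0..<n. U $$ (0,k) * B $$ (k,b))"
      using U B b n by (simp add: scalar_prod_def)
    also have "\<dots> = (\<Sum>k = 0..<n. - ?A $$ (k,b))"
      by (rule sum.cong) (use n b in \<open>auto simp: U_def Bidx\<close>)
    also have "\<dots> = 0" using colsum_zero[OF E loops b] by (simp add: sum_negf)
    finally show "(U * B) $$ (0,b) = 0" .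
  qed
  then have dB: "det B = 0" using det_mult[OF U B] dU by simp
  interpret ph: comm_ring_hom "\<lambda>p::ppoly poly. poly p 0" by unfold_locales auto
  have "det B = poly (det (op_matrix n E {})) 0"
    unfolding B_def by (rule comm_ring_hom.hom_det) unfold_locales
  then show ?thesis using dB by (simp add: poly_0_coeff_0)
qed


lemma mp_hom: "comm_ring_hom (map_poly (ev v))"
proof -
  interpret m: map_poly_comm_ring_hom "ev v" ..
  show ?thesis by unfold_locales
qed

lemma det_ev: "map_poly (ev v) (det M) = det (map_mat (map_poly (ev v)) M)"
  by (rule comm_ring_hom.hom_det[OF mp_hom, symmetric])

lemma coeff_ev: "ev v (coeff p k) = coeff (map_poly (ev v) p) k"
  by (simp add: coeff_map_poly)

lemma rowrep_ev: "map_mat (map_poly (ev v)) (rowrep M j i) = rowrep (map_mat (map_poly (ev v)) M) j i"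
  by (rule comm_ring_hom.rowrep_hom[OF mp_hom])

lemma delete_cpm:
  assumes A: "A \<in> carrier_mat n n" and i: "i < n"
  shows "mat_delete (char_poly_matrix A) i i = char_poly_matrix (mat_delete A i i)"
proof (rule eq_matI)
  fix a b assume "a < dim_row (char_poly_matrix (mat_delete A i i))" "b < dim_col (char_poly_matrix (mat_delete A i i))"
  then have ab: "a < n - 1" "b < n - 1" using A by (auto simp: char_poly_matrix_def)
  have D: "mat_delete A i i \<in> carrier_mat (n-1) (n-1)" using mat_delete_carrier[OF A] .
  have "mat_delete (char_poly_matrix A) i i $$ (a,b) = char_poly_matrix A $$ (if a < i then a else Suc a, if b < i then b else Suc b)"
    using ab A by (simp add: mat_delete_def char_poly_matrix_def)
  also have "\<dots> = (if a = b then [:0,1:] else 0) + [:- mat_delete A i i $$ (a,b):]"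
    using ab A i by (auto simp: cpm_index[OF A] mat_delete_def)
  also have "\<dots> = char_poly_matrix (mat_delete A i i) $$ (a,b)"
    using cpm_index[OF D ab] by simp
  finally show "mat_delete (char_poly_matrix A) i i $$ (a,b) = char_poly_matrix (mat_delete A i i) $$ (a,b)" .
qed (use A in \<open>auto simp: char_poly_matrix_def mat_delete_def\<close>)

lemma x_pow_coeff: "coeff ([:0,1:] ^ n :: 'a::comm_semiring_1 poly) k = (if k = n then 1 else 0)"
proof -
  have "[:0,1:] = (monom 1 1 :: 'a poly)" by (simp add: monom_Suc)
  then have "[:0,1:] ^ n = (monom 1 n :: 'a poly)" by (simp add: monom_power)
  then show ?thesis by (simp add: coeff_monom)
qed

lemma lin_pow_coeff: "k \<le> m \<Longrightarrow> coeff ([:1,1:] ^ m :: int poly) k \<noteq> 0"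
  by (simp add: coeff_linear_poly_power)

lemma nonconst_ev: "Poly_Mapping.lookup c 0 = 0 \<Longrightarrow> ev v c \<noteq> 0 \<Longrightarrow> nonconst c"
  using nonconst_iff[of c] by auto

theorem corollary3p4:
  fixes n :: nat and E :: "(nat \<times> nat) set" and Lk :: "nat set" and i j :: nat
  assumes "n \<ge> 1"
    and "E \<subseteq> {0..<n} \<times> {0..<n}"
    and "\<forall>v. (v,v) \<notin> E"
    and "Lk \<subseteq> {0..<n}"
    and "strongly_connected n E"
    and "i < n" and "j < n"
  shows "num_nonconst (det (op_matrix n E Lk)) = (if Lk \<noteq> {} then n else n - 1)
    \<and> num_nonconst ((-1) ^ (i + j) * det (mat_delete (op_matrix n E Lk) j i))
        = (if i = j then n - 1 else n - shortest_path_len E j i)"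
proof -
  note n = assms(1) and E = assms(2) and loops = assms(3) and Lk = assms(4) and sc = assms(5)
    and i = assms(6) and j = assms(7)
  let ?A = "comp_matrix n E Lk"
  let ?OP = "op_matrix n E Lk"
  have OP: "?OP \<in> carrier_mat n n" by (simp add: op_matrix_def)
  define P where "P = det ?OP"
  define Q where "Q = det (rowrep ?OP j i)"
  have Qeq: "(-1) ^ (i + j) * det (mat_delete ?OP j i) = Q"
    using cofactor_rowrep[OF OP j i] by (simp add: cofactor_def Q_def add.commute)
  have evP: "ev v (coeff P k) = coeff (det (map_mat (map_poly (ev v)) ?OP)) k" for v k
    by (simp add: P_def coeff_ev det_ev)
  have evQ: "ev v (coeff Q k) = coeff (det (rowrep (map_mat (map_poly (ev v)) ?OP) j i)) k" for v k
    by (simp add: Q_def coeff_ev det_ev rowrep_ev)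
  have P0: "Poly_Mapping.lookup (coeff P k) 0 = (if k = n then 1 else 0)" for k
    using evP[of "\<lambda>_. 0" k] by (simp add: ev_zero_point spec_zero det_ZM x_pow_coeff)
  have Pcp: "P = char_poly ?A" by (simp add: P_def char_poly_def op_cpm)
  have Pdeg: "degree P = n" "coeff P n = 1" using degree_monic_char_poly[OF comp_carrier] Pcp by auto
  have KP: "{k. nonconst (coeff P k)} = (if Lk \<noteq> {} then {0..<n} else {1..<n})"
  proof -
    have big: "\<not> nonconst (coeff P k)" if "k \<ge> n" for k
    proof (cases "k = n")
      case True then show ?thesis using Pdeg not_nonconst_1 by simp
    next
      case False
      then have "coeff P k = 0" using that Pdeg by (intro coeff_eq_0) auto
      then show ?thesis using not_nonconst_0 by simp
    qed
    show ?thesis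
    proof (cases "Lk = {}")
      case True
      have r0: "(0::nat) < n" using n by simp
      from tree_exists[OF E sc r0] obtain par and d :: "nat \<Rightarrow> nat" where t1: "d 0 = 0"
        and t2: "\<forall>x. x < n \<longrightarrow> x \<noteq> 0 \<longrightarrow> par x < n \<and> d (par x) + 1 = d x \<and> (x, par x) \<in> E"
        by blast
      note t = t1
      have parP: "\<And>x. x < n \<Longrightarrow> x \<noteq> 0 \<Longrightarrow> par x < n \<and> d (par x) + 1 = d x" using t2 by blast
      have parE: "\<And>x. x < n \<Longrightarrow> x \<noteq> 0 \<Longrightarrow> (x, par x) \<in> E" using t2 by blast
      have sp: "map_mat (map_poly (ev (vT 0 par False))) ?OP = TN n 0 par 0"
        using spec_tree[where d=d and \<rho>=0 and cf=False and Lk=Lk, OF E r0 t(1) parP parE] by simp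
      have dt: "det (TN n 0 par 0) = [:0,1:] * [:1,1:] ^ (n - 1)"
        using tree_det[where d=d and \<rho>=0 and c=0, OF r0 t(1) parP] by simp
      have c0: "coeff P 0 = 0" using coeff0_noleak[OF E loops n] True by (simp add: P_def)
      have "nonconst (coeff P k) \<longleftrightarrow> k \<in> {1..<n}" for k
      proof (cases "k \<ge> n")
        case True then show ?thesis using big by auto
      next
        case False
        show ?thesis
        proof (cases k)
          case 0 then show ?thesis using c0 not_nonconst_0 by simp
        next
          case (Suc k')
          have "ev (vT 0 par False) (coeff P k) = coeff ([:1,1:] ^ (n - 1)) k'"
            using evP[of "vT 0 par False" k] sp dt Suc by simp
          also have "\<dots> \<noteq> 0" using False Suc by (intro lin_pow_coeff) auto
          finally have "nonconst (coeff P k)" using P0[of k] False by (intro nonconst_ev) auto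
          then show ?thesis using False Suc by auto
        qed
      qed
      then have "{k. nonconst (coeff P k)} = {1..<n}" by blast
      then show ?thesis using True by simp
    next
      case False
      then obtain \<rho> where rho: "\<rho> \<in> Lk" by auto
      then have rn: "\<rho> < n" using Lk by auto
      from tree_exists[OF E sc rn] obtain par and d :: "nat \<Rightarrow> nat" where t1: "d \<rho> = 0"
        and t2: "\<forall>x. x < n \<longrightarrow> x \<noteq> \<rho> \<longrightarrow> par x < n \<and> d (par x) + 1 = d x \<and> (x, par x) \<in> E"
        by blast
      note t = t1
      have parP: "\<And>x. x < n \<Longrightarrow> x \<noteq> \<rho> \<Longrightarrow> par x < n \<and> d (par x) + 1 = d x" using t2 by blast
      have parE: "\<And>x. x < n \<Longrightarrow> x \<noteq> \<rho> \<Longrightarrow> (x, par x) \<in> E" using t2 by blast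
      have sp: "map_mat (map_poly (ev (vT \<rho> par True))) ?OP = TN n \<rho> par 1"
        using spec_tree[where d=d and \<rho>=\<rho> and cf=True and Lk=Lk, OF E rn t(1) parP parE] rho by simp
      have dt: "det (TN n \<rho> par 1) = [:1,1:] * [:1,1:] ^ (n - 1)"
        using tree_det[where d=d and \<rho>=\<rho> and c=1, OF rn t(1) parP] by simp
      have "nonconst (coeff P k) \<longleftrightarrow> k \<in> {0..<n}" for k
      proof (cases "k \<ge> n")
        case True then show ?thesis using big by auto
      next
        case False
        have "[:1,1:] * [:1,1:] ^ (n - 1) = ([:1,1:] ^ n :: int poly)"
          using n by (cases n) auto
        then have "ev (vT \<rho> par True) (coeff P k) = coeff ([:1,1:] ^ n) k"
          using evP[of "vT \<rho> par True" k] sp dt by simp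
        also have "\<dots> \<noteq> 0" using False by (intro lin_pow_coeff) auto
        finally have "nonconst (coeff P k)" using P0[of k] False by (intro nonconst_ev) auto
        then show ?thesis using False by auto
      qed
      then have "{k. nonconst (coeff P k)} = {0..<n}" by blast
      then show ?thesis using False by simp
    qed
  qed
  have LHS: "num_nonconst (det ?OP) = (if Lk \<noteq> {} then n else n - 1)"
    unfolding num_nonconst_def P_def[symmetric] KP by simp
  from tree_exists[OF E sc i] obtain par and d :: "nat \<Rightarrow> nat" where t1: "d i = 0"
    and t2: "\<forall>x. x < n \<longrightarrow> x \<noteq> i \<longrightarrow> par x < n \<and> d (par x) + 1 = d x \<and> (x, par x) \<in> E"
    and t3: "\<forall>x. d x = (LEAST k. (x,i) \<in> E ^^ k)"
    by blast
  note t = t1 t1 t3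
  have parP: "\<And>x. x < n \<Longrightarrow> x \<noteq> i \<Longrightarrow> par x < n \<and> d (par x) + 1 = d x" using t2 by blast
  have parE: "\<And>x. x < n \<Longrightarrow> x \<noteq> i \<Longrightarrow> (x, par x) \<in> E" using t2 by blast
  have sp: "map_mat (map_poly (ev (vT i par False))) ?OP = TN n i par 0"
    using spec_tree[where d=d and \<rho>=i and cf=False and Lk=Lk, OF E i t(1) parP parE] by simp
  have KQ: "{k. nonconst (coeff Q k)} = (if i = j then {0..<n-1} else {0..<n - shortest_path_len E j i})"
  proof (cases "i = j")
    case True
    have "Q = cofactor ?OP i i" using cofactor_rowrep[OF OP i i] True by (simp add: Q_def)
    also have "\<dots> = det (mat_delete ?OP i i)"
      by (simp add: cofactor_def mult_2[symmetric] power_mult)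
    also have "\<dots> = char_poly (mat_delete ?A i i)"
      by (simp add: char_poly_def op_cpm delete_cpm[OF comp_carrier i])
    finally have Qcp: "Q = char_poly (mat_delete ?A i i)" .
    have Qdeg: "degree Q = n - 1" "coeff Q (n - 1) = 1"
      using degree_monic_char_poly[OF mat_delete_carrier[OF comp_carrier]] Qcp by auto
    have Q0: "Poly_Mapping.lookup (coeff Q k) 0 = (if k = n - 1 then 1 else 0)" for k
      using evQ[of "\<lambda>_. 0" k] True i by (simp add: ev_zero_point spec_zero det_ZM_same x_pow_coeff)
    have dt: "det (rowrep (TN n i par 0) i i) = [:1,1:] ^ (n - 1)"
      using tree_det_rowrep_same[where d=d and \<rho>=i and c=0, OF i t(1) parP] by simp
    have "nonconst (coeff Q k) \<longleftrightarrow> k < n - 1" for k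
    proof (cases "k < n - 1")
      case False
      show ?thesis
      proof (cases "k = n - 1")
        case True then show ?thesis using Qdeg not_nonconst_1 by simp
      next
        case False
        then have "coeff Q k = 0" using \<open>\<not> k < n - 1\<close> Qdeg by (intro coeff_eq_0) auto
        then show ?thesis using not_nonconst_0 False \<open>\<not> k < n - 1\<close> by simp
      qed
    next
      case lt: True
      have "ev (vT i par False) (coeff Q k) = coeff ([:1,1:] ^ (n - 1)) k"
        using evQ[of "vT i par False" k] sp dt True by simp
      also have "\<dots> \<noteq> 0" using lt by (intro lin_pow_coeff) auto
      finally have "nonconst (coeff Q k)" using Q0[of k] lt by (intro nonconst_ev) auto
      then show ?thesis using lt by auto
    qed
    then have "{k. nonconst (coeff Q k)} = {0..<n-1}" by (simp add: set_eq_iff)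
    then show ?thesis using True by simp
  next
    case False
    define L where "L = shortest_path_len E j i"
    have L: "L = d j" using t3 by (simp add: L_def shortest_path_len_def)
    have ji: "j \<noteq> i" using False by simp
    obtain s :: "int poly" where Ln: "d j + 1 \<le> n" and s: "s = 1 \<or> s = -1"
      and dt: "det (rowrep (TN n i par 0) j i) = s * [:1,1:] ^ (n - 1 - d j)"
      using tree_det_cycle[where d=d and \<rho>=i and c=0, OF i t(1) parP j ji] by auto
    have Q0: "Poly_Mapping.lookup (coeff Q k) 0 = 0" for k
      using evQ[of "\<lambda>_. 0" k] False i j by (simp add: ev_zero_point spec_zero det_ZM_diff)
    define D where "D x = (LEAST k. (j,x) \<in> E ^^ k)" for x
    have Dex: "(j,x) \<in> E ^^ (D x)" if "x < n" for x
    proof -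
      have "\<exists>k. (j,x) \<in> E ^^ k" using sc that j unfolding strongly_connected_def by (auto simp: rtrancl_power)
      then show ?thesis unfolding D_def by (rule LeastI_ex)
    qed
    have Dle: "(j,x) \<in> E ^^ k \<Longrightarrow> D x \<le> k" for x k unfolding D_def by (rule Least_le)
    have Dj: "D j = 0" using Dle[of j 0] by simp
    have Di: "D i = L" by (simp add: D_def L_def shortest_path_len_def)
    have R: "rowrep ?OP j i \<in> carrier_mat n n" using OP by simp
    have OPidx: "a < n \<Longrightarrow> b < n \<Longrightarrow> ?OP $$ (a,b) = (if a = b then monom 1 1 else 0) - [:?A $$ (a,b):]" for a b
      by (simp add: op_matrix_def)
    have Ridx: "a < n \<Longrightarrow> b < n \<Longrightarrow> rowrep ?OP j i $$ (a,b) = (if a = j then (if b = i then 1 else 0) else ?OP $$ (a,b))" for a b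
      using OP by (simp add: rowrep_index)
    have "degree Q \<le> n - 1 - D i"
      unfolding Q_def
    proof (rule det_degree_bound[OF R j i])
      fix a b assume ab: "a < n" "b < n"
      show "degree (rowrep ?OP j i $$ (a,b)) \<le> (if a = b \<and> a \<noteq> j then 1 else 0)"
        using ab by (auto simp: Ridx OPidx degree_monom_eq intro: degree_diff_le)
    next
      fix b assume "b < n" "b \<noteq> i"
      then show "rowrep ?OP j i $$ (j,b) = 0" using j by (simp add: Ridx)
    next
      fix a b assume ab: "a < n" "b < n" "a \<noteq> b" "a \<noteq> j" and nz: "rowrep ?OP j i $$ (a,b) \<noteq> 0"
      then have "(b,a) \<in> E" by (auto simp: Ridx OPidx comp_matrix_def split: if_splits)
      then have "(j,a) \<in> E ^^ Suc (D b)" using relpow_Suc_I[OF Dex[OF ab(2)]] by simp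
      then show "D a \<le> D b + 1" using Dle by simp
    qed (rule Dj)
    then have Qdeg: "degree Q \<le> n - 1 - L" using Di by simp
    have "nonconst (coeff Q k) \<longleftrightarrow> k < n - L" for k
    proof (cases "k < n - L")
      case False
      then have "coeff Q k = 0" using Qdeg Ln L by (intro coeff_eq_0) auto
      then show ?thesis using not_nonconst_0 False by simp
    next
      case lt: True
      have "ev (vT i par False) (coeff Q k) = coeff (s * [:1,1:] ^ (n - 1 - d j)) k"
        using evQ[of "vT i par False" k] sp dt by simp
      also have "\<dots> \<noteq> 0"
      proof -
        have nz: "coeff ([:1,1:] ^ (n - 1 - d j) :: int poly) k \<noteq> 0"
          by (rule lin_pow_coeff) (use lt L Ln in linarith)
        from s show ?thesis
        proof
          assume "s = 1" then show ?thesis using nz by simp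
        next
          assume "s = -1" then show ?thesis using nz by simp
        qed
      qed
      finally have "nonconst (coeff Q k)" using Q0[of k] by (intro nonconst_ev) auto
      then show ?thesis using lt by auto
    qed
    then have "{k. nonconst (coeff Q k)} = {0..<n-L}" by (simp add: set_eq_iff)
    then show ?thesis using False by (simp add: L_def)
  qed
  have RHS: "num_nonconst ((-1) ^ (i + j) * det (mat_delete ?OP j i)) = (if i = j then n - 1 else n - shortest_path_len E j i)"
    unfolding Qeq num_nonconst_def KQ by simp
  show ?thesis using LHS RHS by simp
qed

end
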